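(* Let $G$ be a group (as an algebra with multiplication, inverse and identity) and $K,H\trianglelefteq G$ normal subgroups with $K\le H$. Then: (1) there is a homomorphism $\phi:G/H\to\operatorname{Aut}(K/[K,H])$ such that $G(\alpha_K)/\Delta_{\alpha_K\alpha_H}\cong K/[K,H]\rtimes_\phi G/H$; (2) $G(\alpha_K)/\Delta_{\alpha_K 1}\cong K/[K,G]$. Here $[K,H]$ is the usual group commutator subgroup.
   Context: For a normal subgroup $N\trianglelefteq G$, $\alpha_N=\{(x,y)\in G^2:xy^{-1}\in N\}$ is the corresponding congruence; $1$ denotes the total congruence of $G$. For a congruence $\alpha$ of an algebra $A$, $A(\alpha)=\{(x,y)\in A\times A:(x,y)\in\alpha\}$ is $\alpha$ viewed as a subalgebra of $A\times A$, and for a congruence $\beta$, $\Delta_{\alpha\beta}$ is the congruence of $A(\alpha)$ generated by $\{((u,u),(v,v)):(u,v)\in\beta\}$. For a homomorphism $\phi:Q\to\operatorname{Aut}(N)$, $N\rtimes_\phi Q$ is the semidirect product on $N\times Q$ with $(a,x)(b,y)=(a\,\phi(x)(b),xy)$. *)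

theory Defs
  imports "HOL-Algebra.Algebra"
begin

definition grp_cong :: "('a, 'b) monoid_scheme \<Rightarrow> ('a \<times> 'a) set \<Rightarrow> bool" where
  "grp_cong G R \<longleftrightarrow> equiv (carrier G) R
     \<and> (\<forall>a b c d. (a, b) \<in> R \<longrightarrow> (c, d) \<in> R \<longrightarrow> (a \<otimes>\<^bsub>G\<^esub> c, b \<otimes>\<^bsub>G\<^esub> d) \<in> R)
     \<and> (\<forall>a b. (a, b) \<in> R \<longrightarrow> (inv\<^bsub>G\<^esub> a, inv\<^bsub>G\<^esub> b) \<in> R)"

definition cong_gen :: "('a, 'b) monoid_scheme \<Rightarrow> ('a \<times> 'a) set \<Rightarrow> ('a \<times> 'a) set" where
  "cong_gen G S = \<Inter>{R. grp_cong G R \<and> S \<subseteq> R}"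

definition alpha_N :: "('a, 'b) monoid_scheme \<Rightarrow> 'a set \<Rightarrow> ('a \<times> 'a) set" where
  "alpha_N G N = {(x, y). x \<in> carrier G \<and> y \<in> carrier G \<and> x \<otimes>\<^bsub>G\<^esub> inv\<^bsub>G\<^esub> y \<in> N}"

definition total_cong :: "('a, 'b) monoid_scheme \<Rightarrow> ('a \<times> 'a) set" where
  "total_cong G = carrier G \<times> carrier G"

definition cong_alg :: "('a, 'b) monoid_scheme \<Rightarrow> ('a \<times> 'a) set \<Rightarrow> ('a \<times> 'a) monoid" where
  "cong_alg G \<alpha> = (G \<times>\<times> G) \<lparr>carrier := \<alpha>\<rparr>"

definition Delta :: "('a, 'b) monoid_scheme \<Rightarrow> ('a \<times> 'a) set \<Rightarrow> ('a \<times> 'a) set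
                      \<Rightarrow> (('a \<times> 'a) \<times> ('a \<times> 'a)) set" where
  "Delta G \<alpha> \<beta> = cong_gen (cong_alg G \<alpha>) {((u, u), (v, v)) | u v. (u, v) \<in> \<beta>}"

definition quot_alg :: "('a, 'b) monoid_scheme \<Rightarrow> ('a \<times> 'a) set \<Rightarrow> 'a set monoid" where
  "quot_alg G \<theta> = \<lparr> carrier = carrier G // \<theta>,
     monoid.mult = (\<lambda>A B. \<theta> `` {u \<otimes>\<^bsub>G\<^esub> v | u v. u \<in> A \<and> v \<in> B}),
     monoid.one = \<theta> `` {\<one>\<^bsub>G\<^esub>} \<rparr>"

definition commutator :: "('a, 'b) monoid_scheme \<Rightarrow> 'a set \<Rightarrow> 'a set \<Rightarrow> 'a set" where
  "commutator G K H = generate G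
     {inv\<^bsub>G\<^esub> k \<otimes>\<^bsub>G\<^esub> inv\<^bsub>G\<^esub> h \<otimes>\<^bsub>G\<^esub> k \<otimes>\<^bsub>G\<^esub> h | k h. k \<in> K \<and> h \<in> H}"

definition semidirect :: "('n, 'c) monoid_scheme \<Rightarrow> ('q, 'd) monoid_scheme \<Rightarrow> ('q \<Rightarrow> 'n \<Rightarrow> 'n)
                           \<Rightarrow> ('n \<times> 'q) monoid" where
  "semidirect N Q \<phi> = \<lparr> carrier = carrier N \<times> carrier Q,
     monoid.mult = (\<lambda>(a, x) (b, y). (a \<otimes>\<^bsub>N\<^esub> \<phi> x b, x \<otimes>\<^bsub>Q\<^esub> y)),
     monoid.one = (\<one>\<^bsub>N\<^esub>, \<one>\<^bsub>Q\<^esub>) \<rparr>"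

end

theory Submission
  imports Defs
begin


definition kerrel :: "('a,'b) monoid_scheme \<Rightarrow> ('a \<Rightarrow> 'c) \<Rightarrow> ('a \<times> 'a) set" where
  "kerrel A f = {(p,q). p \<in> carrier A \<and> q \<in> carrier A \<and> f p = f q}"

lemma ker_cong:
  assumes A: "group A" and f: "f \<in> hom A T"
  shows "grp_cong A (kerrel A f)"
proof -
  interpret A: group A by fact
  have fm: "\<And>x y. x \<in> carrier A \<Longrightarrow> y \<in> carrier A \<Longrightarrow> f (x \<otimes>\<^bsub>A\<^esub> y) = f x \<otimes>\<^bsub>T\<^esub> f y"
    using f by (simp add: hom_def)
  have inv: "f (inv\<^bsub>A\<^esub> p) = f (inv\<^bsub>A\<^esub> q)" if p: "p \<in> carrier A" and q: "q \<in> carrier A" and e: "f p = f q" for p q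
  proof -
    have "f (inv\<^bsub>A\<^esub> p) = f (inv\<^bsub>A\<^esub> p \<otimes>\<^bsub>A\<^esub> q \<otimes>\<^bsub>A\<^esub> inv\<^bsub>A\<^esub> q)"
      using p q by (simp add: A.m_assoc)
    also have "\<dots> = (f (inv\<^bsub>A\<^esub> p) \<otimes>\<^bsub>T\<^esub> f q) \<otimes>\<^bsub>T\<^esub> f (inv\<^bsub>A\<^esub> q)"
      using p q by (simp add: fm)
    also have "\<dots> = (f (inv\<^bsub>A\<^esub> p) \<otimes>\<^bsub>T\<^esub> f p) \<otimes>\<^bsub>T\<^esub> f (inv\<^bsub>A\<^esub> q)" using e by simp
    also have "\<dots> = f (inv\<^bsub>A\<^esub> p \<otimes>\<^bsub>A\<^esub> p \<otimes>\<^bsub>A\<^esub> inv\<^bsub>A\<^esub> q)"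
      using p q fm[of "inv\<^bsub>A\<^esub> p \<otimes>\<^bsub>A\<^esub> p" "inv\<^bsub>A\<^esub> q"] fm[of "inv\<^bsub>A\<^esub> p" p] by simp
    also have "\<dots> = f (inv\<^bsub>A\<^esub> q)" using p q by simp
    finally show ?thesis .
  qed
  show ?thesis
    unfolding grp_cong_def kerrel_def
    by (auto simp: equiv_def refl_on_def sym_def trans_def fm inv)
qed

lemma quot_iso:
  assumes A: "group A" and f: "f \<in> hom A T" and s: "f ` carrier A = carrier T"
  shows "quot_alg A (kerrel A f) \<cong> T"
proof -
  interpret A: group A by fact
  let ?t = "kerrel A f"
  have fm: "\<And>x y. x \<in> carrier A \<Longrightarrow> y \<in> carrier A \<Longrightarrow> f (x \<otimes>\<^bsub>A\<^esub> y) = f x \<otimes>\<^bsub>T\<^esub> f y"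
    using f by (simp add: hom_def)
  have cls: "?t `` {p} = {q \<in> carrier A. f q = f p}" if "p \<in> carrier A" for p
    using that by (auto simp: kerrel_def)
  have img: "f ` (?t `` {p}) = {f p}" if "p \<in> carrier A" for p
    using that by (auto simp: cls)
  define FF where "FF = (\<lambda>Z. the_elem (f ` Z))"
  have FF: "FF (?t `` {p}) = f p" if "p \<in> carrier A" for p
    using that by (simp add: FF_def img)
  have prod: "?t `` {u \<otimes>\<^bsub>A\<^esub> v | u v. u \<in> ?t `` {p} \<and> v \<in> ?t `` {q}} = ?t `` {p \<otimes>\<^bsub>A\<^esub> q}"
    if p: "p \<in> carrier A" and q: "q \<in> carrier A" for p q
  proof -
    have "\<And>u v. u \<in> ?t `` {p} \<Longrightarrow> v \<in> ?t `` {q} \<Longrightarrow> f (u \<otimes>\<^bsub>A\<^esub> v) = f (p \<otimes>\<^bsub>A\<^esub> q) \<and> u \<otimes>\<^bsub>A\<^esub> v \<in> carrier A"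
      using p q by (auto simp: cls fm)
    moreover have "p \<in> ?t `` {p}" "q \<in> ?t `` {q}" using p q by (auto simp: cls)
    ultimately have 1: "\<And>z. z \<in> {u \<otimes>\<^bsub>A\<^esub> v | u v. u \<in> ?t `` {p} \<and> v \<in> ?t `` {q}} \<Longrightarrow> f z = f (p \<otimes>\<^bsub>A\<^esub> q) \<and> z \<in> carrier A"
      by blast
    have 2: "p \<otimes>\<^bsub>A\<^esub> q \<in> {u \<otimes>\<^bsub>A\<^esub> v | u v. u \<in> ?t `` {p} \<and> v \<in> ?t `` {q}}"
      using \<open>p \<in> ?t `` {p}\<close> \<open>q \<in> ?t `` {q}\<close> by blast
    show ?thesis
    proof (intro equalityI subsetI)
      fix w assume "w \<in> ?t `` {u \<otimes>\<^bsub>A\<^esub> v | u v. u \<in> ?t `` {p} \<and> v \<in> ?t `` {q}}"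
      then obtain z where "z \<in> {u \<otimes>\<^bsub>A\<^esub> v | u v. u \<in> ?t `` {p} \<and> v \<in> ?t `` {q}}" "(z, w) \<in> ?t" by blast
      with 1[of z] show "w \<in> ?t `` {p \<otimes>\<^bsub>A\<^esub> q}" using p q by (simp add: kerrel_def)
    next
      fix w assume "w \<in> ?t `` {p \<otimes>\<^bsub>A\<^esub> q}"
      hence "(p \<otimes>\<^bsub>A\<^esub> q, w) \<in> ?t" by simp
      with 2 show "w \<in> ?t `` {u \<otimes>\<^bsub>A\<^esub> v | u v. u \<in> ?t `` {p} \<and> v \<in> ?t `` {q}}" by blast
    qed
  qed
  have car: "carrier (quot_alg A ?t) = (\<lambda>p. ?t `` {p}) ` carrier A"
    by (auto simp: quot_alg_def quotient_def)
  have "FF \<in> iso (quot_alg A ?t) T"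
  proof -
    have h: "FF \<in> hom (quot_alg A ?t) T"
    proof (rule homI)
      fix x assume "x \<in> carrier (quot_alg A ?t)"
      then obtain p where p: "p \<in> carrier A" "x = ?t `` {p}" unfolding car by blast
      show "FF x \<in> carrier T" using p s FF by blast
    next
      fix x y assume "x \<in> carrier (quot_alg A ?t)" "y \<in> carrier (quot_alg A ?t)"
      then obtain p q where p: "p \<in> carrier A" "x = ?t `` {p}" and q: "q \<in> carrier A" "y = ?t `` {q}"
        unfolding car by blast
      have "x \<otimes>\<^bsub>quot_alg A ?t\<^esub> y = ?t `` {p \<otimes>\<^bsub>A\<^esub> q}"
        using prod[OF p(1) q(1)] p q by (simp add: quot_alg_def)
      thus "FF (x \<otimes>\<^bsub>quot_alg A ?t\<^esub> y) = FF x \<otimes>\<^bsub>T\<^esub> FF y"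
        using p q by (simp add: FF fm)
    qed
    have i: "inj_on FF (carrier (quot_alg A ?t))"
    proof (rule inj_onI)
      fix x y assume "x \<in> carrier (quot_alg A ?t)" "y \<in> carrier (quot_alg A ?t)" "FF x = FF y"
      then obtain p q where p: "p \<in> carrier A" "x = ?t `` {p}" and q: "q \<in> carrier A" "y = ?t `` {q}"
        and e: "FF (?t `` {p}) = FF (?t `` {q})" unfolding car by blast
      from e have "f p = f q" using p q by (simp add: FF)
      thus "x = y" using p q by (simp add: cls)
    qed
    have "FF ` carrier (quot_alg A ?t) = carrier T"
      using s by (auto simp: car FF image_image)
    thus ?thesis using h i by (simp add: iso_def bij_betw_def)
  qed
  thus ?thesis unfolding is_iso_def by blast
qed



lemma (in group) coset_eq_iff:
  assumes "subgroup N G" "x \<in> carrier G" "y \<in> carrier G"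
  shows "(N #> x = N #> y) \<longleftrightarrow> x \<otimes> inv y \<in> N"
proof
  assume "N #> x = N #> y"
  hence "x \<in> N #> y" using assms rcos_self[OF assms(2,1)] by simp
  thus "x \<otimes> inv y \<in> N" using subgroup.rcos_module_imp[OF assms(1) is_group assms(3)] by blast
next
  assume "x \<otimes> inv y \<in> N"
  hence "x \<in> N #> y" using subgroup.rcos_module_rev[OF assms(1) is_group assms(3) assms(2)] by blast
  thus "N #> x = N #> y" using repr_independence[OF _ assms(3) assms(1)] by simp
qed

lemma (in group) inv_cancel1[simp]:
  "x \<in> carrier G \<Longrightarrow> y \<in> carrier G \<Longrightarrow> inv x \<otimes> (x \<otimes> y) = y"
  by (simp add: m_assoc[symmetric])
lemma (in group) inv_cancel2[simp]:
  "x \<in> carrier G \<Longrightarrow> y \<in> carrier G \<Longrightarrow> x \<otimes> (inv x \<otimes> y) = y"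
  by (simp add: m_assoc[symmetric])

locale L29 = group G for G (structure) +
  fixes K H
  assumes nK: "K \<lhd> G" and nH: "H \<lhd> G" and KH: "K \<subseteq> H"
begin

definition gens where "gens = {inv k \<otimes> inv h \<otimes> k \<otimes> h | k h. k \<in> K \<and> h \<in> H}"
definition CC where "CC = commutator G K H"

lemma sK: "subgroup K G" using nK normal_imp_subgroup by blast
lemma sH: "subgroup H G" using nH normal_imp_subgroup by blast
lemma K_car[simp]: "k \<in> K \<Longrightarrow> k \<in> carrier G" using subgroup.mem_carrier[OF sK] by blast
lemma H_car[simp]: "h \<in> H \<Longrightarrow> h \<in> carrier G" using subgroup.mem_carrier[OF sH] by blast

lemma gens_K: "gens \<subseteq> K"
proof
  fix x assume "x \<in> gens"
  then obtain k h where x: "x = inv k \<otimes> inv h \<otimes> k \<otimes> h" "k \<in> K" "h \<in> H" unfolding gens_def by blast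
  have "inv h \<otimes> k \<otimes> h \<in> K" using normal.inv_op_closed1[OF nK, of h k] x(2,3) by simp
  moreover have "inv k \<in> K" using subgroup.m_inv_closed[OF sK x(2)] .
  ultimately have "inv k \<otimes> (inv h \<otimes> k \<otimes> h) \<in> K" by (simp add: subgroup.m_closed[OF sK])
  thus "x \<in> K" using x by (simp add: m_assoc)
qed

lemma CC_gen: "CC = generate G gens" unfolding CC_def commutator_def gens_def by simp

lemma sC: "subgroup CC G"
proof -
  have "gens \<subseteq> carrier G" using gens_K by auto
  thus ?thesis unfolding CC_gen by (rule generate_is_subgroup)
qed

lemma CK: "CC \<subseteq> K"
  unfolding CC_gen using generate_subgroup_incl[OF gens_K sK] .

lemma C_car[simp]: "c \<in> CC \<Longrightarrow> c \<in> carrier G" using subgroup.mem_carrier[OF sC] by blast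

lemma gen_in: "k \<in> K \<Longrightarrow> h \<in> H \<Longrightarrow> inv k \<otimes> inv h \<otimes> k \<otimes> h \<in> CC"
  unfolding CC_gen gens_def by (rule generate.incl) blast

lemma nC: "CC \<lhd> G"
proof (rule normal_invI[OF sC])
  fix x c assume x: "x \<in> carrier G" and c: "c \<in> CC"
  define S where "S = {y \<in> carrier G. x \<otimes> y \<otimes> inv x \<in> CC}"
  have "subgroup S G"
  proof (rule subgroupI)
    show "S \<subseteq> carrier G" unfolding S_def by blast
    show "S \<noteq> {}" using x subgroup.one_closed[OF sC] by (auto simp: S_def intro!: exI[of _ \<one>])
  next
    fix a assume a: "a \<in> S"
    have "inv (x \<otimes> a \<otimes> inv x) = x \<otimes> inv a \<otimes> inv x"
      using a x by (simp add: S_def inv_mult_group m_assoc)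
    thus "inv a \<in> S" using a subgroup.m_inv_closed[OF sC, of "x \<otimes> a \<otimes> inv x"] by (simp add: S_def)
  next
    fix a b assume a: "a \<in> S" and b: "b \<in> S"
    have "(x \<otimes> a \<otimes> inv x) \<otimes> (x \<otimes> b \<otimes> inv x) = x \<otimes> (a \<otimes> b) \<otimes> inv x"
      using a b x by (simp add: S_def m_assoc)
    thus "a \<otimes> b \<in> S" using a b subgroup.m_closed[OF sC, of "x \<otimes> a \<otimes> inv x" "x \<otimes> b \<otimes> inv x"]
      by (simp add: S_def)
  qed
  moreover have "gens \<subseteq> S"
  proof
    fix g assume "g \<in> gens"
    then obtain k h where g: "g = inv k \<otimes> inv h \<otimes> k \<otimes> h" "k \<in> K" "h \<in> H" unfolding gens_def by blast
    define k' where "k' = x \<otimes> k \<otimes> inv x"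
    define h' where "h' = x \<otimes> h \<otimes> inv x"
    have k': "k' \<in> K" using normal.inv_op_closed2[OF nK x g(2)] k'_def by simp
    have h': "h' \<in> H" using normal.inv_op_closed2[OF nH x g(3)] h'_def by simp
    have "x \<otimes> g \<otimes> inv x = inv k' \<otimes> inv h' \<otimes> k' \<otimes> h'"
      using x g by (simp add: k'_def h'_def inv_mult_group m_assoc)
    thus "g \<in> S" using gen_in[OF k' h'] g x by (simp add: S_def)
  qed
  ultimately have "CC \<subseteq> S" unfolding CC_gen by (rule generate_subgroup_incl[OF _ _, rotated])
  thus "x \<otimes> c \<otimes> inv x \<in> CC" using c S_def by blast
qed

end


context L29 begin

definition Q where "Q = (G\<lparr>carrier := K\<rparr>) Mod CC"

lemma Q_car: "carrier Q = (\<lambda>k. CC #> k) ` K"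
  by (auto simp: Q_def FactGroup_def RCOSETS_def r_coset_def)

lemma Q_mult: "A \<otimes>\<^bsub>Q\<^esub> B = A <#> B"
  by (simp add: Q_def FactGroup_def set_mult_def)

lemma GH_car: "carrier (G Mod H) = (\<lambda>g. H #> g) ` carrier G"
  by (simp add: carrier_FactGroup)

lemma GH_mult: "A \<otimes>\<^bsub>G Mod H\<^esub> B = A <#> B"
  by simp

lemma cos_mult: "x \<in> carrier G \<Longrightarrow> y \<in> carrier G \<Longrightarrow> (CC #> x) <#> (CC #> y) = CC #> (x \<otimes> y)"
  using normal.rcos_sum[OF nC] by blast

lemma Hcos_mult: "x \<in> carrier G \<Longrightarrow> y \<in> carrier G \<Longrightarrow> (H #> x) <#> (H #> y) = H #> (x \<otimes> y)"
  using normal.rcos_sum[OF nH] by blast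

lemma Ceq: "x \<in> carrier G \<Longrightarrow> y \<in> carrier G \<Longrightarrow> (CC #> x = CC #> y) \<longleftrightarrow> x \<otimes> inv y \<in> CC"
  using coset_eq_iff[OF sC] by blast

lemma Heq: "x \<in> carrier G \<Longrightarrow> y \<in> carrier G \<Longrightarrow> (H #> x = H #> y) \<longleftrightarrow> x \<otimes> inv y \<in> H"
  using coset_eq_iff[OF sH] by blast

lemma conjK: "g \<in> carrier G \<Longrightarrow> m \<in> K \<Longrightarrow> g \<otimes> m \<otimes> inv g \<in> K"
  using normal.inv_op_closed2[OF nK] by blast

lemma conjH: "g \<in> carrier G \<Longrightarrow> m \<in> H \<Longrightarrow> g \<otimes> m \<otimes> inv g \<in> H"
  using normal.inv_op_closed2[OF nH] by blast

lemma conjC: "g \<in> carrier G \<Longrightarrow> m \<in> CC \<Longrightarrow> g \<otimes> m \<otimes> inv g \<in> CC"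
  using normal.inv_op_closed2[OF nC] by blast

lemma invK: "m \<in> K \<Longrightarrow> inv m \<in> K" using subgroup.m_inv_closed[OF sK] by blast
lemma invH: "m \<in> H \<Longrightarrow> inv m \<in> H" using subgroup.m_inv_closed[OF sH] by blast
lemma invC: "m \<in> CC \<Longrightarrow> inv m \<in> CC" using subgroup.m_inv_closed[OF sC] by blast
lemma multK: "a \<in> K \<Longrightarrow> b \<in> K \<Longrightarrow> a \<otimes> b \<in> K" using subgroup.m_closed[OF sK] by blast
lemma multH: "a \<in> H \<Longrightarrow> b \<in> H \<Longrightarrow> a \<otimes> b \<in> H" using subgroup.m_closed[OF sH] by blast
lemma multC: "a \<in> CC \<Longrightarrow> b \<in> CC \<Longrightarrow> a \<otimes> b \<in> CC" using subgroup.m_closed[OF sC] by blast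

lemma conj_coset: "h \<in> H \<Longrightarrow> m \<in> K \<Longrightarrow> CC #> (h \<otimes> m \<otimes> inv h) = CC #> m"
proof -
  assume h: "h \<in> H" and m: "m \<in> K"
  have "m \<otimes> inv (h \<otimes> m \<otimes> inv h) = inv (inv m) \<otimes> inv (inv h) \<otimes> inv m \<otimes> inv h"
    using h m by (simp add: inv_mult_group m_assoc)
  also have "\<dots> \<in> CC" using gen_in[OF invK[OF m] invH[OF h]] .
  finally have "CC #> m = CC #> (h \<otimes> m \<otimes> inv h)" using h m Ceq by simp
  thus ?thesis by simp
qed

lemma WD:
  assumes g: "g \<in> carrier G" "g' \<in> carrier G" "H #> g = H #> g'"
    and b: "b \<in> K" "b' \<in> K" "CC #> b = CC #> b'"
  shows "CC #> (g \<otimes> b \<otimes> inv g) = CC #> (g' \<otimes> b' \<otimes> inv g')"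
proof -
  have bb: "b \<otimes> inv b' \<in> CC" using b Ceq by simp
  have "(g \<otimes> b \<otimes> inv g) \<otimes> inv (g \<otimes> b' \<otimes> inv g) = g \<otimes> (b \<otimes> inv b') \<otimes> inv g"
    using g b by (simp add: inv_mult_group m_assoc)
  also have "\<dots> \<in> CC" using conjC[OF g(1) bb] .
  finally have 1: "CC #> (g \<otimes> b \<otimes> inv g) = CC #> (g \<otimes> b' \<otimes> inv g)"
    using g b Ceq by simp
  define h where "h = g' \<otimes> inv g"
  have h: "h \<in> H" using g(1,2) g(3)[symmetric] Heq h_def by simp
  have "g' \<otimes> b' \<otimes> inv g' = h \<otimes> (g \<otimes> b' \<otimes> inv g) \<otimes> inv h"
    using g b by (simp add: h_def inv_mult_group m_assoc)
  hence "CC #> (g' \<otimes> b' \<otimes> inv g') = CC #> (g \<otimes> b' \<otimes> inv g)"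
    using conj_coset[OF h conjK[OF g(1) b(2)]] by simp
  thus ?thesis using 1 by simp
qed


definition phi where
  "phi Z = (\<lambda>B\<in>carrier Q. CC #> ((SOME g. g \<in> Z) \<otimes> (SOME b. b \<in> B) \<otimes> inv (SOME g. g \<in> Z)))"

lemma CK_cos: "b \<in> K \<Longrightarrow> CC #> b \<subseteq> K"
  using CK multK by (auto simp: r_coset_def)

lemma phi_eq: assumes g: "g \<in> carrier G" and b: "b \<in> K"
  shows "phi (H #> g) (CC #> b) = CC #> (g \<otimes> b \<otimes> inv g)"
proof -
  have inQ: "CC #> b \<in> carrier Q" using b unfolding Q_car by blast
  define g0 where "g0 = (SOME x. x \<in> H #> g)"
  define b0 where "b0 = (SOME x. x \<in> CC #> b)"
  have "g \<in> H #> g" using rcos_self[OF g sH] .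
  hence g0: "g0 \<in> H #> g" unfolding g0_def by (rule someI)
  have "b \<in> CC #> b" using rcos_self[OF _ sC] b by simp
  hence b0: "b0 \<in> CC #> b" unfolding b0_def by (rule someI)
  have g0c: "g0 \<in> carrier G" using g0 r_coset_subset_G[OF subgroup.subset[OF sH] g] by blast
  have b0K: "b0 \<in> K" using b0 CK_cos[OF b] by blast
  have e1: "H #> g0 = H #> g" using repr_independence[OF g0 g sH] by simp
  have e2: "CC #> b0 = CC #> b" using repr_independence[OF b0 _ sC] b by simp
  have "phi (H #> g) (CC #> b) = CC #> (g0 \<otimes> b0 \<otimes> inv g0)"
    using inQ by (simp add: phi_def g0_def b0_def)
  also have "\<dots> = CC #> (g \<otimes> b \<otimes> inv g)"
    by (rule WD[OF g0c g e1 b0K b e2])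
  finally show ?thesis .
qed

lemma phi_auto: assumes g: "g \<in> carrier G" shows "phi (H #> g) \<in> auto Q"
proof -
  have hom: "phi (H #> g) \<in> hom Q Q"
  proof (rule homI)
    fix B assume "B \<in> carrier Q"
    then obtain b where b: "b \<in> K" "B = CC #> b" unfolding Q_car by blast
    have "phi (H #> g) B = CC #> (g \<otimes> b \<otimes> inv g)" using b g phi_eq by simp
    moreover have "g \<otimes> b \<otimes> inv g \<in> K" using conjK b g by simp
    ultimately show "phi (H #> g) B \<in> carrier Q" unfolding Q_car by blast
  next
    fix B1 B2 assume "B1 \<in> carrier Q" "B2 \<in> carrier Q"
    then obtain b1 b2 where b: "b1 \<in> K" "B1 = CC #> b1" "b2 \<in> K" "B2 = CC #> b2" unfolding Q_car by blast
    have e: "g \<otimes> (b1 \<otimes> b2) \<otimes> inv g = (g \<otimes> b1 \<otimes> inv g) \<otimes> (g \<otimes> b2 \<otimes> inv g)"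
      using g b by (simp add: m_assoc)
    have k1: "g \<otimes> b1 \<otimes> inv g \<in> K" and k2: "g \<otimes> b2 \<otimes> inv g \<in> K" using conjK g b by auto
    have "B1 \<otimes>\<^bsub>Q\<^esub> B2 = CC #> (b1 \<otimes> b2)" using b by (simp add: Q_mult cos_mult)
    hence "phi (H #> g) (B1 \<otimes>\<^bsub>Q\<^esub> B2) = CC #> (g \<otimes> (b1 \<otimes> b2) \<otimes> inv g)"
      using phi_eq[OF g multK[OF b(1) b(3)]] by simp
    also have "\<dots> = (CC #> (g \<otimes> b1 \<otimes> inv g)) <#> (CC #> (g \<otimes> b2 \<otimes> inv g))"
      unfolding e using cos_mult k1 k2 by simp
    also have "\<dots> = phi (H #> g) B1 \<otimes>\<^bsub>Q\<^esub> phi (H #> g) B2"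
      using phi_eq[OF g b(1)] phi_eq[OF g b(3)] b by (simp add: Q_mult)
    finally show "phi (H #> g) (B1 \<otimes>\<^bsub>Q\<^esub> B2) = phi (H #> g) B1 \<otimes>\<^bsub>Q\<^esub> phi (H #> g) B2" .
  qed
  have inj: "inj_on (phi (H #> g)) (carrier Q)"
  proof (rule inj_onI)
    fix B1 B2 assume "B1 \<in> carrier Q" "B2 \<in> carrier Q" and e: "phi (H #> g) B1 = phi (H #> g) B2"
    then obtain b1 b2 where b: "b1 \<in> K" "B1 = CC #> b1" "b2 \<in> K" "B2 = CC #> b2" unfolding Q_car by blast
    have "(g \<otimes> b1 \<otimes> inv g) \<otimes> inv (g \<otimes> b2 \<otimes> inv g) \<in> CC"
      using e b g by (simp add: phi_eq Ceq)
    moreover have "(g \<otimes> b1 \<otimes> inv g) \<otimes> inv (g \<otimes> b2 \<otimes> inv g) = g \<otimes> (b1 \<otimes> inv b2) \<otimes> inv g"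
      using b g by (simp add: inv_mult_group m_assoc)
    ultimately have "inv g \<otimes> (g \<otimes> (b1 \<otimes> inv b2) \<otimes> inv g) \<otimes> inv (inv g) \<in> CC"
      using conjC[of "inv g"] g by simp
    hence "b1 \<otimes> inv b2 \<in> CC" using g b by (simp add: m_assoc)
    thus "B1 = B2" using b Ceq by simp
  qed
  have img: "phi (H #> g) ` carrier Q = carrier Q"
  proof
    show "phi (H #> g) ` carrier Q \<subseteq> carrier Q" using hom by (auto simp: hom_def)
  next
    show "carrier Q \<subseteq> phi (H #> g) ` carrier Q"
    proof
      fix B assume "B \<in> carrier Q"
      then obtain b where b: "b \<in> K" "B = CC #> b" unfolding Q_car by blast
      have b': "inv g \<otimes> b \<otimes> inv (inv g) \<in> K" using conjK[of "inv g" b] g b by simp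
      have "phi (H #> g) (CC #> (inv g \<otimes> b \<otimes> inv (inv g))) = B"
        using b b' g by (simp add: phi_eq m_assoc)
      moreover have "CC #> (inv g \<otimes> b \<otimes> inv (inv g)) \<in> carrier Q" using b' unfolding Q_car by blast
      ultimately show "B \<in> phi (H #> g) ` carrier Q" by (metis image_eqI)
    qed
  qed
  have "phi (H #> g) \<in> extensional (carrier Q)" by (simp add: phi_def)
  thus ?thesis using hom inj img by (simp add: auto_def Bij_def bij_betw_def)
qed

lemma phi_hom: "phi \<in> hom (G Mod H) (AutoGroup Q)"
proof (rule homI)
  fix Z assume "Z \<in> carrier (G Mod H)"
  then obtain g where g: "g \<in> carrier G" "Z = H #> g" unfolding GH_car by blast
  show "phi Z \<in> carrier (AutoGroup Q)" using phi_auto g by (simp add: AutoGroup_def)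
next
  fix Z1 Z2 assume "Z1 \<in> carrier (G Mod H)" "Z2 \<in> carrier (G Mod H)"
  then obtain x y where xy: "x \<in> carrier G" "Z1 = H #> x" "y \<in> carrier G" "Z2 = H #> y"
    unfolding GH_car by blast
  have B: "phi Z1 \<in> Bij (carrier Q)" "phi Z2 \<in> Bij (carrier Q)"
    using phi_auto xy by (auto simp: auto_def)
  have "phi (H #> (x \<otimes> y)) = compose (carrier Q) (phi Z1) (phi Z2)"
  proof
    fix B show "phi (H #> (x \<otimes> y)) B = compose (carrier Q) (phi Z1) (phi Z2) B"
    proof (cases "B \<in> carrier Q")
      case True
      then obtain b where b: "b \<in> K" "B = CC #> b" unfolding Q_car by blast
      have "x \<otimes> y \<otimes> b \<otimes> inv (x \<otimes> y) = x \<otimes> (y \<otimes> b \<otimes> inv y) \<otimes> inv x"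
        using xy b by (simp add: inv_mult_group m_assoc)
      thus ?thesis using True xy b by (simp add: compose_def phi_eq conjK)
    next
      case False thus ?thesis by (simp add: compose_def phi_def)
    qed
  qed
  thus "phi (Z1 \<otimes>\<^bsub>G Mod H\<^esub> Z2) = phi Z1 \<otimes>\<^bsub>AutoGroup Q\<^esub> phi Z2"
    using B xy by (simp add: Hcos_mult AutoGroup_def BijGroup_def)
qed


definition al where "al = alpha_N G K"
definition AA where "AA = cong_alg G al"
definition ff where "ff p = (CC #> (fst p \<otimes> inv (snd p)), H #> snd p)"

lemma al_iff: "(x, y) \<in> al \<longleftrightarrow> x \<in> carrier G \<and> y \<in> carrier G \<and> x \<otimes> inv y \<in> K"
  by (simp add: al_def alpha_N_def)

lemma AA_car: "carrier AA = al" by (simp add: AA_def cong_alg_def)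
lemma AA_mult: "(a, b) \<otimes>\<^bsub>AA\<^esub> (c, d) = (a \<otimes> c, b \<otimes> d)"
  by (simp add: AA_def cong_alg_def DirProd_def)

lemma GG: "group (G \<times>\<times> G)" using DirProd_group is_group by blast

lemma sub_al: "subgroup al (G \<times>\<times> G)"
proof (rule group.subgroupI[OF GG])
  show "al \<subseteq> carrier (G \<times>\<times> G)" by (auto simp: al_def alpha_N_def)
  have "(\<one>, \<one>) \<in> al" using al_iff subgroup.one_closed[OF sK] by simp
  thus "al \<noteq> {}" by blast
next
  fix p assume p: "p \<in> al"
  obtain x y where xy: "p = (x, y)" using surj_pair[of p] by blast
  have c: "x \<in> carrier G" "y \<in> carrier G" "x \<otimes> inv y \<in> K" using p xy al_iff by auto
  have "inv x \<otimes> inv (inv y) = inv x \<otimes> inv (x \<otimes> inv y) \<otimes> inv (inv x)"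
    using c by (simp add: inv_mult_group m_assoc)
  also have "\<dots> \<in> K" using conjK[of "inv x"] invK c by simp
  finally show "inv\<^bsub>G \<times>\<times> G\<^esub> p \<in> al" using c xy by (simp add: inv_DirProd[OF is_group is_group] al_iff)
next
  fix p q assume p: "p \<in> al" and q: "q \<in> al"
  obtain x y where xy: "p = (x, y)" using surj_pair[of p] by blast
  obtain x' y' where xy': "q = (x', y')" using surj_pair[of q] by blast
  have c: "x \<in> carrier G" "y \<in> carrier G" "x \<otimes> inv y \<in> K" using p xy al_iff by auto
  have c': "x' \<in> carrier G" "y' \<in> carrier G" "x' \<otimes> inv y' \<in> K" using q xy' al_iff by auto
  have "(x \<otimes> x') \<otimes> inv (y \<otimes> y') = (x \<otimes> (x' \<otimes> inv y') \<otimes> inv x) \<otimes> (x \<otimes> inv y)"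
    using c c' by (simp add: inv_mult_group m_assoc)
  also have "\<dots> \<in> K" using multK conjK c c' by simp
  finally show "p \<otimes>\<^bsub>G \<times>\<times> G\<^esub> q \<in> al" using c c' xy xy' by (simp add: al_iff)
qed

lemma grpA: "group AA"
  unfolding AA_def cong_alg_def using subgroup.subgroup_is_group[OF sub_al GG] .

lemma AA_inv: "(x, y) \<in> al \<Longrightarrow> inv\<^bsub>AA\<^esub> (x, y) = (inv x, inv y)"
proof -
  assume a: "(x, y) \<in> al"
  have "inv\<^bsub>AA\<^esub> (x, y) = inv\<^bsub>G \<times>\<times> G\<^esub> (x, y)"
    unfolding AA_def cong_alg_def using group.m_inv_consistent[OF GG sub_al a] .
  thus ?thesis using a al_iff by (simp add: inv_DirProd[OF is_group is_group])
qed

definition TT where "TT = semidirect Q (G Mod H) phi"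

lemma ff_hom: "ff \<in> hom AA TT"
proof (rule homI)
  fix p assume "p \<in> carrier AA"
  then obtain x y where xy: "p = (x, y)" "(x, y) \<in> al" unfolding AA_car using surj_pair[of p] by blast
  hence c: "x \<in> carrier G" "y \<in> carrier G" "x \<otimes> inv y \<in> K" using al_iff by auto
  have "CC #> (x \<otimes> inv y) \<in> carrier Q" using c(3) unfolding Q_car by blast
  moreover have "H #> y \<in> carrier (G Mod H)" using c(2) unfolding GH_car by blast
  ultimately show "ff p \<in> carrier TT"
    using xy unfolding TT_def semidirect_def ff_def by simp
next
  fix p q assume "p \<in> carrier AA" "q \<in> carrier AA"
  then obtain x y x' y' where xy: "p = (x, y)" "(x, y) \<in> al" "q = (x', y')" "(x', y') \<in> al"
    unfolding AA_car using surj_pair[of p] surj_pair[of q] by blast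
  hence c: "x \<in> carrier G" "y \<in> carrier G" "x \<otimes> inv y \<in> K"
    and c': "x' \<in> carrier G" "y' \<in> carrier G" "x' \<otimes> inv y' \<in> K" using al_iff by auto
  have k2: "y \<otimes> (x' \<otimes> inv y') \<otimes> inv y \<in> K" using conjK c c' by simp
  have e: "(x \<otimes> x') \<otimes> inv (y \<otimes> y') = (x \<otimes> inv y) \<otimes> (y \<otimes> (x' \<otimes> inv y') \<otimes> inv y)"
    using c c' by (simp add: inv_mult_group m_assoc)
  have "ff (p \<otimes>\<^bsub>AA\<^esub> q) = (CC #> ((x \<otimes> inv y) \<otimes> (y \<otimes> (x' \<otimes> inv y') \<otimes> inv y)), H #> (y \<otimes> y'))"
    using xy by (simp add: AA_mult ff_def e)
  also have "\<dots> = ((CC #> (x \<otimes> inv y)) <#> phi (H #> y) (CC #> (x' \<otimes> inv y')), (H #> y) <#> (H #> y'))"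
    using c c' k2 by (simp add: phi_eq cos_mult Hcos_mult)
  also have "\<dots> = ff p \<otimes>\<^bsub>TT\<^esub> ff q"
    using xy by (simp add: TT_def semidirect_def ff_def Q_mult)
  finally show "ff (p \<otimes>\<^bsub>AA\<^esub> q) = ff p \<otimes>\<^bsub>TT\<^esub> ff q" .
qed

lemma ff_surj: "ff ` carrier AA = carrier TT"
proof
  show "ff ` carrier AA \<subseteq> carrier TT" using ff_hom by (auto simp: hom_def)
next
  show "carrier TT \<subseteq> ff ` carrier AA"
  proof
    fix t assume "t \<in> carrier TT"
    then obtain k g where t: "k \<in> K" "g \<in> carrier G" "t = (CC #> k, H #> g)"
      unfolding TT_def semidirect_def Q_car GH_car by auto
    have "(k \<otimes> g, g) \<in> al" using t by (simp add: al_iff m_assoc)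
    moreover have "ff (k \<otimes> g, g) = t" using t by (simp add: ff_def m_assoc)
    ultimately show "t \<in> ff ` carrier AA" unfolding AA_car by (metis image_eqI)
  qed
qed


definition SS where "SS = {((u, u), (v, v)) | u v. (u, v) \<in> alpha_N G H}"

lemma Delta_unf: "Delta G al (alpha_N G H) = \<Inter>{R. grp_cong AA R \<and> SS \<subseteq> R}"
  by (simp add: Delta_def cong_gen_def AA_def SS_def)

lemma one_al: "(\<one>, \<one>) \<in> al" using al_iff subgroup.one_closed[OF sK] by simp

lemma ker_sub:
  assumes R: "grp_cong AA R" and S: "SS \<subseteq> R"
  shows "kerrel AA ff \<subseteq> R"
proof -
  have eq: "equiv al R" and mu: "\<And>a b c d. (a, b) \<in> R \<Longrightarrow> (c, d) \<in> R \<Longrightarrow> (a \<otimes>\<^bsub>AA\<^esub> c, b \<otimes>\<^bsub>AA\<^esub> d) \<in> R"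
    and iv: "\<And>a b. (a, b) \<in> R \<Longrightarrow> (inv\<^bsub>AA\<^esub> a, inv\<^bsub>AA\<^esub> b) \<in> R"
    using R unfolding grp_cong_def AA_car by blast+
  have rf: "\<And>a. a \<in> al \<Longrightarrow> (a, a) \<in> R" using eq by (simp add: equiv_def refl_on_def)
  have Rsub: "R \<subseteq> al \<times> al" using eq by (simp add: equiv_def refl_on_def)
  have uH: "((u, u), (\<one>, \<one>)) \<in> R" if u: "u \<in> H" for u
  proof -
    have "(u, \<one>) \<in> alpha_N G H" using u by (simp add: alpha_N_def)
    hence "((u, u), (\<one>, \<one>)) \<in> SS" unfolding SS_def by blast
    thus ?thesis using S by blast
  qed
  define Cs where "Cs = {c \<in> K. ((c, \<one>), (\<one>, \<one>)) \<in> R}"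
  have sCs: "subgroup Cs G"
  proof (rule subgroupI)
    show "Cs \<subseteq> carrier G" unfolding Cs_def by auto
    have "\<one> \<in> Cs" using rf[OF one_al] subgroup.one_closed[OF sK] by (simp add: Cs_def)
    thus "Cs \<noteq> {}" by blast
  next
    fix c assume c: "c \<in> Cs"
    hence cK: "c \<in> K" and cR: "((c, \<one>), (\<one>, \<one>)) \<in> R" by (auto simp: Cs_def)
    have "(c, \<one>) \<in> al" using cK al_iff by simp
    hence "(inv c, \<one>) = inv\<^bsub>AA\<^esub> (c, \<one>)" by (simp add: AA_inv)
    moreover have "(\<one>, \<one>) = inv\<^bsub>AA\<^esub> (\<one>, \<one>)" using one_al by (simp add: AA_inv)
    ultimately have "((inv c, \<one>), (\<one>, \<one>)) \<in> R" using iv[OF cR] by simp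
    thus "inv c \<in> Cs" using invK[OF cK] by (simp add: Cs_def)
  next
    fix c d assume "c \<in> Cs" "d \<in> Cs"
    hence cK: "c \<in> K" "d \<in> K" and cR: "((c, \<one>), (\<one>, \<one>)) \<in> R" "((d, \<one>), (\<one>, \<one>)) \<in> R"
      by (auto simp: Cs_def)
    have "((c, \<one>) \<otimes>\<^bsub>AA\<^esub> (d, \<one>), (\<one>, \<one>) \<otimes>\<^bsub>AA\<^esub> (\<one>, \<one>)) \<in> R" using mu[OF cR] .
    hence "((c \<otimes> d, \<one>), (\<one>, \<one>)) \<in> R" using cK by (simp add: AA_mult)
    thus "c \<otimes> d \<in> Cs" using multK[OF cK] by (simp add: Cs_def)
  qed
  have "gens \<subseteq> Cs"
  proof
    fix x assume "x \<in> gens"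
    then obtain k h where x: "x = inv k \<otimes> inv h \<otimes> k \<otimes> h" "k \<in> K" "h \<in> H" unfolding gens_def by blast
    have a1: "(inv k, \<one>) \<in> al" "(k, \<one>) \<in> al" using x invK al_iff by auto
    have "((inv k, \<one>) \<otimes>\<^bsub>AA\<^esub> (inv h, inv h), (inv k, \<one>) \<otimes>\<^bsub>AA\<^esub> (\<one>, \<one>)) \<in> R"
      using mu[OF rf[OF a1(1)] uH[OF invH[OF x(3)]]] .
    hence "(((inv k, \<one>) \<otimes>\<^bsub>AA\<^esub> (inv h, inv h)) \<otimes>\<^bsub>AA\<^esub> (k, \<one>), ((inv k, \<one>) \<otimes>\<^bsub>AA\<^esub> (\<one>, \<one>)) \<otimes>\<^bsub>AA\<^esub> (k, \<one>)) \<in> R"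
      using mu rf[OF a1(2)] by blast
    hence "((((inv k, \<one>) \<otimes>\<^bsub>AA\<^esub> (inv h, inv h)) \<otimes>\<^bsub>AA\<^esub> (k, \<one>)) \<otimes>\<^bsub>AA\<^esub> (h, h), (((inv k, \<one>) \<otimes>\<^bsub>AA\<^esub> (\<one>, \<one>)) \<otimes>\<^bsub>AA\<^esub> (k, \<one>)) \<otimes>\<^bsub>AA\<^esub> (\<one>, \<one>)) \<in> R"
      using mu uH[OF x(3)] by blast
    hence "((inv k \<otimes> inv h \<otimes> k \<otimes> h, \<one>), (\<one>, \<one>)) \<in> R"
      using x by (simp add: AA_mult m_assoc)
    moreover have "x \<in> K" using gens_K \<open>x \<in> gens\<close> by blast
    ultimately show "x \<in> Cs" using x by (simp add: Cs_def)
  qed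
  hence CCs: "CC \<subseteq> Cs" unfolding CC_gen by (rule generate_subgroup_incl[OF _ sCs])
  show ?thesis
  proof
    fix pq assume "pq \<in> kerrel AA ff"
    moreover obtain p q where "pq = (p, q)" using surj_pair[of pq] by blast
    moreover obtain x1 y1 where "p = (x1, y1)" using surj_pair[of p] by blast
    moreover obtain x2 y2 where "q = (x2, y2)" using surj_pair[of q] by blast
    ultimately have pq: "pq = ((x1, y1), (x2, y2))" "(x1, y1) \<in> al" "(x2, y2) \<in> al"
      "ff (x1, y1) = ff (x2, y2)"
      unfolding kerrel_def AA_car by auto
    have c1: "x1 \<in> carrier G" "y1 \<in> carrier G" "x1 \<otimes> inv y1 \<in> K" using pq al_iff by auto
    have c2: "x2 \<in> carrier G" "y2 \<in> carrier G" "x2 \<otimes> inv y2 \<in> K" using pq al_iff by auto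
    have e1: "CC #> (x1 \<otimes> inv y1) = CC #> (x2 \<otimes> inv y2)" and e2: "H #> y1 = H #> y2"
      using pq(4) by (auto simp: ff_def)
    define c where "c = (x1 \<otimes> inv y1) \<otimes> inv (x2 \<otimes> inv y2)"
    have cC: "c \<in> CC" using e1 c1 c2 Ceq c_def by simp
    define u where "u = inv y2 \<otimes> y1"
    have "y1 \<otimes> inv y2 \<in> H" using e2 c1 c2 Heq by simp
    hence "inv y2 \<otimes> (y1 \<otimes> inv y2) \<otimes> inv (inv y2) \<in> H" using conjH[of "inv y2"] c2 by simp
    hence uH': "u \<in> H" using c1 c2 by (simp add: u_def m_assoc)
    have "c \<in> Cs" using cC CCs by blast
    hence cR: "((c, \<one>), (\<one>, \<one>)) \<in> R" by (simp add: Cs_def)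
    have "(((c, \<one>) \<otimes>\<^bsub>AA\<^esub> (x2, y2)) \<otimes>\<^bsub>AA\<^esub> (u, u), ((\<one>, \<one>) \<otimes>\<^bsub>AA\<^esub> (x2, y2)) \<otimes>\<^bsub>AA\<^esub> (\<one>, \<one>)) \<in> R"
      using mu[OF mu[OF cR rf[OF pq(3)]] uH[OF uH']] .
    moreover have "((c, \<one>) \<otimes>\<^bsub>AA\<^esub> (x2, y2)) \<otimes>\<^bsub>AA\<^esub> (u, u) = (x1, y1)"
      using c1 c2 by (simp add: AA_mult c_def u_def m_assoc inv_mult_group)
    moreover have "((\<one>, \<one>) \<otimes>\<^bsub>AA\<^esub> (x2, y2)) \<otimes>\<^bsub>AA\<^esub> (\<one>, \<one>) = (x2, y2)"
      using c2 by (simp add: AA_mult)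
    ultimately show "pq \<in> R" using pq(1) by simp
  qed
qed

lemma ker_in: "kerrel AA ff \<in> {R. grp_cong AA R \<and> SS \<subseteq> R}"
proof -
  have "SS \<subseteq> kerrel AA ff"
  proof
    fix z assume "z \<in> SS"
    then obtain u v where z: "z = ((u, u), (v, v))" "(u, v) \<in> alpha_N G H" unfolding SS_def by blast
    have uv: "u \<in> carrier G" "v \<in> carrier G" "u \<otimes> inv v \<in> H" using z by (auto simp: alpha_N_def)
    have "(u, u) \<in> al" "(v, v) \<in> al" using uv al_iff subgroup.one_closed[OF sK] by auto
    moreover have "H #> u = H #> v" using uv Heq by simp
    ultimately show "z \<in> kerrel AA ff" using z uv by (simp add: kerrel_def AA_car ff_def)
  qed
  thus ?thesis using ker_cong[OF grpA ff_hom] by blast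
qed

lemma Delta_eq: "Delta G al (alpha_N G H) = kerrel AA ff"
  unfolding Delta_unf using ker_sub ker_in by blast

lemma part1:
  "\<exists>\<phi>. \<phi> \<in> hom (G Mod H) (AutoGroup ((G\<lparr>carrier := K\<rparr>) Mod commutator G K H))
              \<and> quot_alg (cong_alg G (alpha_N G K)) (Delta G (alpha_N G K) (alpha_N G H))
                  \<cong> semidirect ((G\<lparr>carrier := K\<rparr>) Mod commutator G K H) (G Mod H) \<phi>"
proof (intro exI conjI)
  show "phi \<in> hom (G Mod H) (AutoGroup ((G\<lparr>carrier := K\<rparr>) Mod commutator G K H))"
    using phi_hom by (simp add: Q_def CC_def)
  have "quot_alg AA (kerrel AA ff) \<cong> TT" using quot_iso[OF grpA ff_hom ff_surj] .
  thus "quot_alg (cong_alg G (alpha_N G K)) (Delta G (alpha_N G K) (alpha_N G H))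
                  \<cong> semidirect ((G\<lparr>carrier := K\<rparr>) Mod commutator G K H) (G Mod H) phi"
    using Delta_eq by (simp add: TT_def Q_def CC_def AA_def al_def)
qed


definition f2 where "f2 p = CC #> (fst p \<otimes> inv (snd p))"

lemma f2_hom: assumes HG: "H = carrier G" shows "f2 \<in> hom AA Q"
proof (rule homI)
  fix p assume "p \<in> carrier AA"
  then obtain x y where xy: "p = (x, y)" "(x, y) \<in> al" unfolding AA_car using surj_pair[of p] by blast
  hence c: "x \<otimes> inv y \<in> K" using al_iff by auto
  show "f2 p \<in> carrier Q" using c xy unfolding Q_car f2_def by auto
next
  fix p q assume "p \<in> carrier AA" "q \<in> carrier AA"
  then obtain x y x' y' where xy: "p = (x, y)" "(x, y) \<in> al" "q = (x', y')" "(x', y') \<in> al"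
    unfolding AA_car using surj_pair[of p] surj_pair[of q] by blast
  hence c: "x \<in> carrier G" "y \<in> carrier G" "x \<otimes> inv y \<in> K"
    and c': "x' \<in> carrier G" "y' \<in> carrier G" "x' \<otimes> inv y' \<in> K" using al_iff by auto
  have k2: "y \<otimes> (x' \<otimes> inv y') \<otimes> inv y \<in> K" using conjK c c' by simp
  have e: "(x \<otimes> x') \<otimes> inv (y \<otimes> y') = (x \<otimes> inv y) \<otimes> (y \<otimes> (x' \<otimes> inv y') \<otimes> inv y)"
    using c c' by (simp add: inv_mult_group m_assoc)
  have yH: "y \<in> H" using HG c by simp
  have "f2 (p \<otimes>\<^bsub>AA\<^esub> q) = CC #> ((x \<otimes> inv y) \<otimes> (y \<otimes> (x' \<otimes> inv y') \<otimes> inv y))"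
    using xy by (simp add: AA_mult f2_def e)
  also have "\<dots> = (CC #> (x \<otimes> inv y)) <#> (CC #> (y \<otimes> (x' \<otimes> inv y') \<otimes> inv y))"
    using c c' k2 by (simp add: cos_mult)
  also have "\<dots> = (CC #> (x \<otimes> inv y)) <#> (CC #> (x' \<otimes> inv y'))"
    using conj_coset[OF yH c'(3)] by simp
  also have "\<dots> = f2 p \<otimes>\<^bsub>Q\<^esub> f2 q"
    using xy by (simp add: f2_def Q_mult)
  finally show "f2 (p \<otimes>\<^bsub>AA\<^esub> q) = f2 p \<otimes>\<^bsub>Q\<^esub> f2 q" .
qed

lemma f2_surj: "f2 ` carrier AA = carrier Q"
proof
  show "f2 ` carrier AA \<subseteq> carrier Q"
  proof
    fix t assume "t \<in> f2 ` carrier AA"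
    then obtain p where p: "p \<in> al" "t = f2 p" unfolding AA_car by blast
    obtain x y where xy: "p = (x, y)" using surj_pair[of p] by blast
    have "x \<otimes> inv y \<in> K" using p xy al_iff by auto
    thus "t \<in> carrier Q" using p xy unfolding Q_car f2_def by auto
  qed
next
  show "carrier Q \<subseteq> f2 ` carrier AA"
  proof
    fix t assume "t \<in> carrier Q"
    then obtain k where t: "k \<in> K" "t = CC #> k" unfolding Q_car by blast
    have "(k, \<one>) \<in> al" using t by (simp add: al_iff)
    moreover have "f2 (k, \<one>) = t" using t by (simp add: f2_def)
    ultimately show "t \<in> f2 ` carrier AA" unfolding AA_car by (metis image_eqI)
  qed
qed

lemma ker_f2: assumes HG: "H = carrier G" shows "kerrel AA f2 = kerrel AA ff"
proof -
  have "H #> y = H" if "y \<in> carrier G" for y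
    using subgroup.rcos_const[OF sH is_group] that HG by simp
  moreover have "p \<in> al \<Longrightarrow> snd p \<in> carrier G" for p
    using al_iff[of "fst p" "snd p"] by simp
  ultimately show ?thesis unfolding kerrel_def AA_car f2_def ff_def by auto
qed

lemma part2: assumes HG: "H = carrier G"
  shows "quot_alg (cong_alg G (alpha_N G K)) (Delta G (alpha_N G K) (alpha_N G H))
           \<cong> (G\<lparr>carrier := K\<rparr>) Mod commutator G K H"
proof -
  have "quot_alg AA (kerrel AA f2) \<cong> Q" using quot_iso[OF grpA f2_hom[OF HG] f2_surj] .
  thus ?thesis using Delta_eq ker_f2[OF HG] by (simp add: Q_def CC_def AA_def al_def)
qed

end

theorem lemma2p9:
  fixes G :: "('a, 'b) monoid_scheme" and K H :: "'a set"
  assumes "group G" and "K \<lhd> G" and "H \<lhd> G" and "K \<subseteq> H"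
  shows "(\<exists>\<phi>. \<phi> \<in> hom (G Mod H) (AutoGroup ((G\<lparr>carrier := K\<rparr>) Mod commutator G K H))
              \<and> quot_alg (cong_alg G (alpha_N G K)) (Delta G (alpha_N G K) (alpha_N G H))
                  \<cong> semidirect ((G\<lparr>carrier := K\<rparr>) Mod commutator G K H) (G Mod H) \<phi>)
       \<and> quot_alg (cong_alg G (alpha_N G K)) (Delta G (alpha_N G K) (total_cong G))
           \<cong> (G\<lparr>carrier := K\<rparr>) Mod commutator G K (carrier G)"
proof
  interpret L1: L29 G K H using assms by (simp add: L29_def L29_axioms_def)
  show "\<exists>\<phi>. \<phi> \<in> hom (G Mod H) (AutoGroup ((G\<lparr>carrier := K\<rparr>) Mod commutator G K H))
              \<and> quot_alg (cong_alg G (alpha_N G K)) (Delta G (alpha_N G K) (alpha_N G H))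
                  \<cong> semidirect ((G\<lparr>carrier := K\<rparr>) Mod commutator G K H) (G Mod H) \<phi>"
    by (rule L1.part1)
next
  interpret G: group G by fact
  have sK: "K \<subseteq> carrier G" using assms(2) normal_imp_subgroup subgroup.subset by blast
  interpret L2: L29 G K "carrier G" using assms G.normal_self sK by (simp add: L29_def L29_axioms_def)
  have "total_cong G = alpha_N G (carrier G)"
    by (auto simp: total_cong_def alpha_N_def)
  thus "quot_alg (cong_alg G (alpha_N G K)) (Delta G (alpha_N G K) (total_cong G))
           \<cong> (G\<lparr>carrier := K\<rparr>) Mod commutator G K (carrier G)"
    using L2.part2 by simp
qed

end
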